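(* Let $\rho$ be a growth function and $m\ge2$ an integer. Let $\sigma=(\sigma_1,\dots,\sigma_m)\in\{-1,1\}^m$ with $\sigma_i=-1$ and $\sigma_{i+1}=1$ for some $1\le i\le m-1$, and let $\phi\in\{-1,1\}^m$ be given by $\phi_i=1$, $\phi_{i+1}=-1$, and $\phi_j=\sigma_j$ for $j\notin\{i,i+1\}$. If $f^\rho_\sigma=(a_\sigma,b_\sigma)$ and $f^\rho_\phi=(a_\phi,b_\phi)$, then $a_\sigma\le a_\phi$ and $b_\sigma=b_\phi$.
   Context: A growth function is an increasing $\rho:\mathbb{R}\to\mathbb{R}^{\ge0}$. Binary strings are elements of $\{-1,1\}^m$ (the empty string $<>$ for $m=0$); $\sigma\wedge u$ denotes concatenation. $f^\rho_\sigma\in\mathbb{R}^2$ is defined recursively: $f^\rho_{<>}=(0,0)$, and if $f^\rho_\sigma=(a,b)$ then $f^\rho_{\sigma\wedge1}=(a+1,b+1)$ and $f^\rho_{\sigma\wedge-1}=(a+\rho(a+b),b-1)$. *)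

theory Defs
  imports Complex_Main
begin

definition growth_function :: "(real \<Rightarrow> real) \<Rightarrow> bool" where
  "growth_function \<rho> \<longleftrightarrow> mono \<rho> \<and> (\<forall>x. 0 \<le> \<rho> x)"

definition f_step :: "(real \<Rightarrow> real) \<Rightarrow> real \<times> real \<Rightarrow> int \<Rightarrow> real \<times> real" where
  "f_step \<rho> p u = (case p of (a, b) \<Rightarrow>
      if u = 1 then (a + 1, b + 1) else (a + \<rho> (a + b), b - 1))"

definition f_rho :: "(real \<Rightarrow> real) \<Rightarrow> int list \<Rightarrow> real \<times> real" where
  "f_rho \<rho> \<sigma> = foldl (f_step \<rho>) (0, 0) \<sigma>"

end

theory Submission
  imports Defs
begin

lemma suffix_mono:
  assumes "mono \<rho>" "a \<le> a'"
  shows "fst (foldl (f_step \<rho>) (a, b) zs) \<le> fst (foldl (f_step \<rho>) (a', b) zs)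
       \<and> snd (foldl (f_step \<rho>) (a, b) zs) = snd (foldl (f_step \<rho>) (a', b) zs)"
  using assms(2)
proof (induction zs arbitrary: a a' b)
  case Nil then show ?case by simp
next
  case (Cons z zs)
  have "\<rho> (a + b) \<le> \<rho> (a' + b)" using assms(1) Cons.prems by (simp add: monoD)
  then show ?case using Cons by (auto simp: f_step_def)
qed

theorem mainTheorem16:
  fixes \<rho> :: "real \<Rightarrow> real" and m i :: nat and \<sigma> \<phi> :: "int list"
  assumes "growth_function \<rho>"
    and "m \<ge> 2"
    and "length \<sigma> = m" and "set \<sigma> \<subseteq> {-1, 1}"
    and "1 \<le> i" and "i \<le> m - 1"
    and "\<sigma> ! (i - 1) = -1" and "\<sigma> ! i = 1"
    and "length \<phi> = m"
    and "\<phi> ! (i - 1) = 1" and "\<phi> ! i = -1"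
    and "\<forall>j. 1 \<le> j \<and> j \<le> m \<and> j \<notin> {i, i + 1} \<longrightarrow> \<phi> ! (j - 1) = \<sigma> ! (j - 1)"
  shows "fst (f_rho \<rho> \<sigma>) \<le> fst (f_rho \<rho> \<phi>) \<and> snd (f_rho \<rho> \<sigma>) = snd (f_rho \<rho> \<phi>)"
proof -
  define k where "k = i - 1"
  have ki: "i = Suc k" using assms(5) k_def by simp
  have km: "Suc k < m" using assms(2,6) ki by simp
  have ag: "\<forall>j<m. j \<noteq> k \<and> j \<noteq> Suc k \<longrightarrow> \<phi> ! j = \<sigma> ! j"
  proof (intro allI impI)
    fix j assume "j < m" "j \<noteq> k \<and> j \<noteq> Suc k"
    moreover have "1 \<le> Suc j \<and> Suc j \<le> m \<and> Suc j \<notin> {i, i + 1} \<longrightarrow> \<phi> ! (Suc j - 1) = \<sigma> ! (Suc j - 1)"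
      using assms(12) by blast
    ultimately show "\<phi> ! j = \<sigma> ! j" using ki by auto
  qed
  have j2: "\<And>j. \<not> j \<le> Suc k \<Longrightarrow> Suc (Suc (j - 2)) = j" by arith
  define P where "P = take k \<sigma>"
  define S where "S = drop (Suc (Suc k)) \<sigma>"
  have s: "\<sigma> = P @ [-1, 1] @ S"
  proof (rule nth_equalityI)
    show "length \<sigma> = length (P @ [-1, 1] @ S)" using km assms(3) by (simp add: P_def S_def)
    fix j assume "j < length \<sigma>"
    then show "\<sigma> ! j = (P @ [-1, 1] @ S) ! j" using km assms(3,7,8) ki
      by (cases "j = Suc k"; auto simp: P_def S_def nth_append min_def nth_Cons' j2)
  qed
  have p: "\<phi> = P @ [1, -1] @ S"
  proof (rule nth_equalityI)
    show "length \<phi> = length (P @ [1, -1] @ S)" using km assms(3,9) by (simp add: P_def S_def)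
    fix j assume "j < length \<phi>"
    then show "\<phi> ! j = (P @ [1, -1] @ S) ! j" using km assms(3,9,10,11) ki ag
      by (cases "j = Suc k"; auto simp: P_def S_def nth_append min_def nth_Cons' j2)
  qed
  obtain a b where ab: "foldl (f_step \<rho>) (0, 0) P = (a, b)" by fastforce
  have mono: "mono \<rho>" using assms(1) by (simp add: growth_function_def)
  have "\<rho> (a + b) \<le> \<rho> (a + 1 + (b + 1))" using mono by (simp add: monoD)
  then have "a + \<rho> (a + b) + 1 \<le> a + 1 + \<rho> (a + 1 + (b + 1))" by simp
  from suffix_mono[OF mono this, of b S]
  show ?thesis unfolding s p f_rho_def using ab by (simp add: f_step_def)
qed

end
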